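(* Let $m\ge0$ be an integer. For each $n\ge0$ and $x\in O$: (1) $\mathcal{D}_n(x)^{q^m}=\sum_{i=0}^\infty[m]^i\binom{i+n}{n}\mathcal{D}_{i+n}(x)$; (2) $\mathcal{D}_n(x)=\sum_{i=0}^\infty(-[m])^i\binom{i+n}{n}\mathcal{D}_{i+n}(x)^{q^m}$.
   Context: Let $q$ be a prime power, $O=\mathbf{F}_q[[T]]$ with the $T$-adic topology. Put $[m]=T^{q^m}-T$. Hasse derivatives: $\mathcal{D}_n(\sum_ia_iT^i)=\sum_i\binom{i}{n}a_iT^{i-n}$; all binomial coefficients are read in $\mathbf{F}_q$. *)

theory Defs
  imports "HOL-Computational_Algebra.Formal_Power_Series" "HOL-Library.Cardinality"
begin

(* O = F_q[[T]] is rendered as 'a fps for a finite field 'a (q = CARD('a));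
   the T-adic topology is the library metric on fps. *)

definition hasse :: "nat \<Rightarrow> 'a::comm_ring_1 fps \<Rightarrow> 'a fps" where
  "hasse n x = Abs_fps (\<lambda>k. of_nat ((k + n) choose n) * fps_nth x (k + n))"

definition bracket :: "nat \<Rightarrow> 'a::{finite,comm_ring_1} fps" where
  "bracket m = fps_X ^ (CARD('a) ^ m) - fps_X"

end

theory Submission
  imports Defs "HOL-Computational_Algebra.Polynomial"
begin
unbundle fps_syntax


lemma pow_card_same:
  fixes x :: "'a :: {field,finite}"
  shows   "x ^ CARD('a) = x"
proof (cases "x = 0")
  case False
  have "x * (\<Prod>y\<in>UNIV-{0}. x * y) = x * x ^ (CARD('a) - 1) * \<Prod>(UNIV-{0})"
    by (simp add: prod.distrib mult_ac)
  also have "x * x ^ (CARD('a) - 1) = x ^ Suc (CARD('a) - 1)"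
    by (subst power_Suc) auto
  also have "Suc (CARD('a) - 1) = CARD('a)"
    using finite_UNIV_card_ge_0[where ?'a = 'a] by simp
  also have "(\<Prod>y\<in>UNIV-{0}. x * y) = (\<Prod>y\<in>UNIV-{0}. y)"
    by (rule prod.reindex_bij_witness[of _ "\<lambda>y. y / x" "\<lambda>y. x * y"]) (use False in auto)
  finally show ?thesis
    by simp
qed (use finite_UNIV_card_ge_0[where ?'a = 'a] in auto)

lemma pow_card_pow_same:
  fixes x :: "'a :: {field,finite}"
  shows   "x ^ (CARD('a) ^ m) = x"
  by (induction m) (simp_all add: pow_card_same power_mult)

lemma card_ge2: "CARD('a::{field,finite}) \<ge> 2"
proof -
  have "{0::'a, 1} \<subseteq> UNIV" by simp
  hence "card {0::'a,1} \<le> CARD('a)" by (intro card_mono) auto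
  thus ?thesis by simp
qed

lemma choose_card_zero:
  assumes "0 < k" "k < CARD('a::{field,finite})"
  shows "of_nat (CARD('a) choose k) = (0::'a)"
proof -
  define q where "q = CARD('a)"
  define P :: "'a poly" where "P = [:1,1:]^q - monom 1 q - 1"
  have roots: "poly P c = 0" for c
    using pow_card_same[of "c+1"] pow_card_same[of c]
    by (simp add: P_def q_def poly_monom add.commute)
  have "P = 0"
  proof (rule ccontr)
    assume nz: "P \<noteq> 0"
    have "degree P \<le> q"
      unfolding P_def
      by (intro degree_diff_le degree_power_le[THEN order.trans]) (auto simp: degree_monom_le intro: order.trans[OF degree_power_le])
    moreover have "coeff P q = 0"
      using card_ge2[where 'a='a] by (simp add: P_def coeff_linear_poly_power q_def)
    ultimately have "degree P < q" using nz
      by (metis le_neq_implies_less leading_coeff_0_iff)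
    moreover have "card {x. poly P x = 0} \<le> degree P" by (rule card_poly_roots_bound[OF nz])
    moreover have "{x. poly P x = 0} = UNIV" using roots by auto
    ultimately show False by (simp add: q_def)
  qed
  hence "coeff P k = 0" by simp
  thus ?thesis using assms by (simp add: P_def coeff_linear_poly_power q_def)
qed



lemma frob1:
  fixes f g :: "'a::{field,finite} fps"
  shows "(f + g) ^ CARD('a) = f ^ CARD('a) + g ^ CARD('a)"
proof -
  define q where "q = CARD('a)"
  have q2: "q \<ge> 2" using card_ge2[where 'a='a] by (simp add: q_def)
  have "(f + g) ^ q = (\<Sum>k\<le>q. of_nat (q choose k) * f ^ k * g ^ (q - k))"
    by (rule binomial_ring)
  also have "\<dots> = (\<Sum>k\<in>{0,q}. of_nat (q choose k) * f ^ k * g ^ (q - k))"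
  proof (intro sum.mono_neutral_right ballI)
    fix k assume "k \<in> {..q} - {0, q}"
    hence k: "0 < k" "k < q" by auto
    have "(of_nat (q choose k) :: 'a fps) = fps_const (of_nat (q choose k))"
      by (simp add: fps_of_nat)
    also have "\<dots> = 0" using choose_card_zero[of k, where 'a='a] k by (simp add: q_def)
    finally show "of_nat (q choose k) * f ^ k * g ^ (q - k) = 0" by simp
  qed auto
  finally show ?thesis using q2 by (simp add: q_def add.commute)
qed

lemma frob:
  fixes f g :: "'a::{field,finite} fps"
  shows "(f + g) ^ (CARD('a) ^ m) = f ^ (CARD('a) ^ m) + g ^ (CARD('a) ^ m)"
proof (induction m)
  case (Suc m)
  have "(f + g) ^ (CARD('a) ^ Suc m) = ((f + g) ^ (CARD('a) ^ m)) ^ CARD('a)"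
    by (simp only: power_mult[symmetric] power_Suc mult.commute)
  also have "\<dots> = (f ^ (CARD('a) ^ m)) ^ CARD('a) + (g ^ (CARD('a) ^ m)) ^ CARD('a)"
    by (simp add: Suc frob1)
  finally show ?case by (simp only: power_mult[symmetric] power_Suc mult.commute)
qed simp

lemma frob_sum:
  fixes f :: "'b \<Rightarrow> 'a::{field,finite} fps"
  shows "(sum f A) ^ (CARD('a) ^ m) = (\<Sum>i\<in>A. f i ^ (CARD('a) ^ m))"
  by (induction A rule: infinite_finite_induct) (auto simp: frob)

lemma hasse_nth: "hasse n x $ k = of_nat ((k + n) choose n) * x $ (k + n)"
  by (simp add: hasse_def)

lemma hasse_add: "hasse i (a + b) = hasse i a + hasse i b"
  by (simp add: fps_eq_iff hasse_nth algebra_simps)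

lemma hasse_sum: "hasse i (sum f A) = (\<Sum>k\<in>A. hasse i (f k))"
  by (induction A rule: infinite_finite_induct) (auto simp: hasse_add fps_eq_iff hasse_nth)

lemma hasse_cmult: "hasse i (fps_const c * a) = fps_const c * hasse i a"
  by (simp add: fps_eq_iff hasse_nth algebra_simps)

lemma hasse_diff: "hasse i (a - b :: 'a::comm_ring_1 fps) = hasse i a - hasse i b"
  by (simp add: fps_eq_iff hasse_nth algebra_simps)

lemma hasse_X_power:
  "hasse i (fps_X ^ k :: 'a::comm_ring_1 fps) =
     (if i \<le> k then fps_const (of_nat (k choose i)) * fps_X ^ (k - i) else 0)"
  by (auto simp: fps_eq_iff hasse_nth fps_X_power_iff)

lemma choose_ident: "((k + i) choose i) * ((k + i + n) choose n) = ((i + n) choose n) * ((k + i + n) choose (i + n))"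
proof -
  have "((k + i + n) choose (k + i)) * ((k + i) choose i) = ((k + i + n) choose i) * ((k + i + n - i) choose (k + i - i))"
    by (rule choose_mult) auto
  moreover have "((k + i + n) choose (i + n)) * ((i + n) choose i) = ((k + i + n) choose i) * ((k + i + n - i) choose (i + n - i))"
    by (rule choose_mult) auto
  moreover have "(k + n) choose k = (k + n) choose n" by (metis binomial_symmetric le_add2 add_diff_cancel_right')
  moreover have "(k + i + n) choose (k + i) = (k + i + n) choose n" by (metis binomial_symmetric le_add1 add_diff_cancel_left')
  moreover have "(i + n) choose i = (i + n) choose n" by (metis binomial_symmetric le_add2 add_diff_cancel_right')
  ultimately show ?thesis by (simp add: algebra_simps)
qed

lemma hasse_hasse:
  "hasse i (hasse n x) = (of_nat ((i + n) choose n) :: 'a::comm_ring_1 fps) * hasse (i + n) x"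
proof -
  have "hasse i (hasse n x) $ k = (of_nat ((i + n) choose n) * hasse (i + n) x) $ k" for k
  proof -
    have "hasse i (hasse n x) $ k = of_nat (((k + i) choose i) * ((k + i + n) choose n)) * x $ (k + i + n)"
      by (simp add: hasse_nth add.assoc)
    also have "\<dots> = of_nat (((i + n) choose n) * ((k + i + n) choose (i + n))) * x $ (k + i + n)"
      by (simp only: choose_ident)
    also have "\<dots> = (fps_const (of_nat ((i + n) choose n)) * hasse (i + n) x) $ k"
      by (simp add: hasse_nth add.assoc)
    finally show ?thesis by (simp add: fps_of_nat)
  qed
  thus ?thesis by (simp add: fps_eq_iff)
qed

definition lowz :: "nat \<Rightarrow> 'a::comm_ring_1 fps \<Rightarrow> bool" where
  "lowz k F \<longleftrightarrow> (\<forall>j<k. F $ j = 0)"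

lemma lowz_mult_nth:
  assumes "lowz a F" "lowz b G" "N < a + b"
  shows "(F * G) $ N = 0"
  unfolding fps_mult_nth
proof (intro sum.neutral ballI)
  fix i assume "i \<in> {0..N}"
  hence "i < a \<or> N - i < b" using assms(3) by auto
  thus "F $ i * G $ (N - i) = 0" using assms(1,2) by (auto simp: lowz_def)
qed

lemma lowz_mult: "lowz a F \<Longrightarrow> lowz b G \<Longrightarrow> lowz (a + b) (F * G)"
  using lowz_mult_nth unfolding lowz_def by blast

lemma lowz_power: "lowz a F \<Longrightarrow> lowz (a * n) (F ^ n)"
proof (induction n)
  case 0 show ?case by (simp add: lowz_def)
next
  case (Suc n)
  have "lowz (a + a * n) (F * F ^ n)" by (intro lowz_mult Suc.prems Suc.IH[OF Suc.prems])
  thus ?case by (simp add: algebra_simps)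
qed

lemma lowz_power1: "h $ 0 = 0 \<Longrightarrow> lowz i (h ^ i)"
  using lowz_power[of 1 h i] by (simp add: lowz_def)

lemma lowz_hasse: "lowz k R \<Longrightarrow> lowz (k - i) (hasse i R)"
  by (simp add: lowz_def hasse_nth)

lemma lowz_compose: "lowz k F \<Longrightarrow> lowz k (F oo g)"
  unfolding lowz_def fps_compose_nth by (auto intro!: sum.neutral)

lemma compose_cutoff: "(F oo G) $ N = (fps_cutoff (Suc N) F oo G) $ N"
  by (simp add: fps_compose_nth)

lemma lowz_cutoff: "lowz k (F - fps_cutoff k F)"
  by (simp add: lowz_def)

lemma cutoff_rep: "fps_cutoff (Suc N) f = (\<Sum>k=0..N. fps_const (f $ k) * fps_X ^ k)"
  by (simp add: fps_eq_iff fps_sum_rep_nth)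



lemma compose_cmult:
  assumes "g $ 0 = (0::'a::idom)"
  shows "(fps_const c * a) oo g = fps_const c * (a oo g)"
  by (simp add: fps_compose_mult_distrib[OF assms])

lemma of_nat_compose: "(of_nat n :: 'a::comm_ring_1 fps) oo g = of_nat n"
  by (metis fps_const_compose fps_of_nat)

lemma sums_fin_fps:
  fixes f :: "nat \<Rightarrow> 'a::ab_group_add fps"
  assumes "\<And>i. i > K \<Longrightarrow> f i = 0"
  shows "f sums (\<Sum>i\<le>K. f i)"
  unfolding sums_def
proof (rule tendsto_eventually)
  show "eventually (\<lambda>n. (\<Sum>i<n. f i) = (\<Sum>i\<le>K. f i)) sequentially"
    using eventually_ge_at_top[of "Suc K"]
  proof eventually_elim
    case (elim n)
    show ?case
      by (rule sum.mono_neutral_right) (use elim assms in auto)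
  qed
qed

lemma taylor_mono_fin:
  fixes g h :: "'a::idom fps"
  assumes g0: "g $ 0 = 0" and km: "k \<le> M"
  shows "(\<Sum>i\<le>M. h ^ i * (hasse i (fps_X ^ k) oo g)) = (g + h) ^ k"
proof -
  have eq: "h ^ i * (hasse i (fps_X ^ k) oo g) =
      (if i \<le> k then of_nat (k choose i) * h ^ i * g ^ (k - i) else 0)" for i
    by (cases "i \<le> k") (simp_all add: hasse_X_power fps_compose_mult_distrib[OF g0] of_nat_compose fps_X_power_compose[OF g0] fps_of_nat mult_ac)
  have "(\<Sum>i\<le>M. h ^ i * (hasse i (fps_X ^ k) oo g)) = (\<Sum>i\<le>k. h ^ i * (hasse i (fps_X ^ k) oo g))"
    by (rule sum.mono_neutral_right) (use km in \<open>auto simp: eq\<close>)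
  also have "\<dots> = (\<Sum>i\<le>k. of_nat (k choose i) * h ^ i * g ^ (k - i))"
    by (intro sum.cong) (auto simp: eq)
  also have "\<dots> = (h + g) ^ k" by (rule binomial_ring[symmetric])
  finally show ?thesis by (simp add: add.commute)
qed

lemma taylor_poly:
  fixes g h :: "'a::idom fps"
  assumes g0: "g $ 0 = 0" and h0: "h $ 0 = 0"
  assumes P_def: "P = (\<Sum>k=0..N. fps_const (c k) * fps_X ^ k)"
  shows "(\<lambda>i. h ^ i * (hasse i P oo g)) sums (P oo (g + h))"
proof -
  have gh0: "(g + h) $ 0 = 0" using g0 h0 by simp
  have Pn: "P $ j = (if j \<le> N then c j else 0)" for j
    unfolding P_def using fps_sum_rep_nth[of "Abs_fps c" N j] by simp
  have hz: "hasse i P = 0" if "i > N" for i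
    using that by (simp add: fps_eq_iff hasse_nth Pn)
  have eq: "h ^ i * (hasse i P oo g) = (\<Sum>k=0..N. fps_const (c k) * (h ^ i * (hasse i (fps_X ^ k) oo g)))" for i
    by (simp add: P_def hasse_sum hasse_cmult fps_compose_sum_distrib compose_cmult[OF g0]
                  sum_distrib_left mult_ac)
  have eq2: "P oo (g + h) = (\<Sum>k=0..N. fps_const (c k) * (g + h) ^ k)"
    by (simp add: P_def fps_compose_sum_distrib compose_cmult[OF gh0] fps_X_power_compose[OF gh0])
  have "(\<Sum>i\<le>N. h ^ i * (hasse i P oo g)) = (\<Sum>k=0..N. fps_const (c k) * (\<Sum>i\<le>N. h ^ i * (hasse i (fps_X ^ k) oo g)))"
    unfolding eq by (simp add: sum_distrib_left sum.swap[of _ "{..N}"])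
  also have "\<dots> = P oo (g + h)" unfolding eq2
    by (intro sum.cong refl) (simp add: taylor_mono_fin[OF g0])
  finally have "(\<Sum>i\<le>N. h ^ i * (hasse i P oo g)) = P oo (g + h)" .
  moreover have "(\<lambda>i. h ^ i * (hasse i P oo g)) sums (\<Sum>i\<le>N. h ^ i * (hasse i P oo g))"
    by (rule sums_fin_fps) (simp add: hz)
  ultimately show ?thesis by simp
qed

lemma taylor:
  fixes g h f :: "'a::idom fps"
  assumes g0: "g $ 0 = 0" and h0: "h $ 0 = 0"
  shows "(\<lambda>i. h ^ i * (hasse i f oo g)) sums (f oo (g + h))"
  unfolding sums_def
proof (rule tendsto_fpsI)
  fix N
  define P where "P = fps_cutoff (Suc N) f"
  define R where "R = f - P"
  have fPR: "f = P + R" by (simp add: R_def)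
  have lR: "lowz (Suc N) R" unfolding R_def P_def by (rule lowz_cutoff)
  have Prep: "P = (\<Sum>k=0..N. fps_const (f $ k) * fps_X ^ k)" unfolding P_def by (rule cutoff_rep)
  have sP: "(\<lambda>i. h ^ i * (hasse i P oo g)) sums (P oo (g + h))"
    by (rule taylor_poly[OF g0 h0 Prep])
  hence ev: "eventually (\<lambda>n. (\<Sum>i<n. h ^ i * (hasse i P oo g)) $ N = (P oo (g + h)) $ N) sequentially"
    unfolding sums_def tendsto_fps_iff by blast
  have Rz: "(h ^ i * (hasse i R oo g)) $ N = 0" for i
    by (rule lowz_mult_nth[OF lowz_power1[OF h0] lowz_compose[OF lowz_hasse[OF lR]]]) auto
  have tgt: "(f oo (g + h)) $ N = (P oo (g + h)) $ N"
    unfolding P_def by (rule compose_cutoff)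
  show "eventually (\<lambda>n. (\<Sum>i<n. h ^ i * (hasse i f oo g)) $ N = (f oo (g + h)) $ N) sequentially"
    using ev
  proof eventually_elim
    case (elim n)
    have "(\<Sum>i<n. h ^ i * (hasse i f oo g)) $ N =
          (\<Sum>i<n. h ^ i * (hasse i P oo g)) $ N + (\<Sum>i<n. (h ^ i * (hasse i R oo g)) $ N)"
      by (simp add: fPR hasse_add fps_compose_add_distrib distrib_left fps_sum_nth sum.distrib)
    also have "\<dots> = (f oo (g + h)) $ N" using elim Rz tgt by simp
    finally show ?case .
  qed
qed



lemma Q_pos: "CARD('a::{field,finite}) ^ m > 0"
  using card_ge2[where 'a='a] by simp

lemma pow_compose:
  fixes f :: "'a::{field,finite} fps"
  shows "f ^ (CARD('a) ^ m) = f oo fps_X ^ (CARD('a) ^ m)"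
proof (rule fps_ext)
  fix N
  define Q where "Q = CARD('a) ^ m"
  have Q0: "Q > 0" unfolding Q_def by (rule Q_pos)
  have X0: "(fps_X ^ Q :: 'a fps) $ 0 = 0" using Q0 by simp
  define P where "P = fps_cutoff (Suc N) f"
  define R where "R = f - P"
  have fPR: "f = P + R" by (simp add: R_def)
  have lR: "lowz (Suc N) R" unfolding R_def P_def by (rule lowz_cutoff)
  have Prep: "P = (\<Sum>k=0..N. fps_const (f $ k) * fps_X ^ k)" unfolding P_def by (rule cutoff_rep)
  have RQ: "(R ^ Q) $ N = 0"
  proof -
    have "lowz (Suc N * Q) (R ^ Q)" by (rule lowz_power[OF lR])
    moreover have "N < Suc N * Q" using Q0 by (cases Q) auto
    ultimately show ?thesis by (simp add: lowz_def)
  qed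
  have PQ: "P ^ Q = P oo fps_X ^ Q"
  proof -
    have "P ^ Q = (\<Sum>k=0..N. (fps_const (f $ k) * fps_X ^ k) ^ Q)"
      unfolding Prep Q_def by (rule frob_sum)
    also have "\<dots> = (\<Sum>k=0..N. fps_const (f $ k) * (fps_X ^ Q) ^ k)"
    proof (intro sum.cong refl)
      fix k
      have "(fps_const (f $ k) * fps_X ^ k) ^ Q = fps_const ((f $ k) ^ Q) * (fps_X ^ k) ^ Q"
        by (simp only: power_mult_distrib fps_const_power)
      also have "(f $ k) ^ Q = f $ k" unfolding Q_def by (rule pow_card_pow_same)
      also have "(fps_X ^ k) ^ Q = (fps_X ^ Q :: 'a fps) ^ k"
        by (simp only: power_mult[symmetric] mult.commute)
      finally show "(fps_const (f $ k) * fps_X ^ k) ^ Q = fps_const (f $ k) * (fps_X ^ Q) ^ k" .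
    qed
    also have "\<dots> = P oo fps_X ^ Q"
      by (simp add: Prep fps_compose_sum_distrib compose_cmult[OF X0] fps_X_power_compose[OF X0])
    finally show ?thesis .
  qed
  have "(f ^ Q) $ N = (P ^ Q) $ N"
    using RQ by (simp add: fPR Q_def frob)
  also have "\<dots> = (P oo fps_X ^ Q) $ N" by (simp add: PQ)
  also have "\<dots> = (f oo fps_X ^ Q) $ N" unfolding P_def by (rule compose_cutoff[symmetric])
  finally show "(f ^ (CARD('a) ^ m)) $ N = (f oo fps_X ^ (CARD('a) ^ m)) $ N" by (simp add: Q_def)
qed

lemma of_nat_pow_Q: "(of_nat c :: 'a::{field,finite} fps) ^ (CARD('a) ^ m) = of_nat c"
  by (metis fps_of_nat fps_const_power pow_card_pow_same)

theorem proposition5: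
  fixes x :: "'a::{field,finite} fps" and m n :: nat
  shows "(\<lambda>i. (bracket m :: 'a fps) ^ i * of_nat ((i + n) choose n) * hasse (i + n) x)
            sums (hasse n x ^ (CARD('a) ^ m))
         \<and> (\<lambda>i. (- (bracket m :: 'a fps)) ^ i * of_nat ((i + n) choose n) * hasse (i + n) x ^ (CARD('a) ^ m))
            sums (hasse n x)"
proof
  define Q where "Q = CARD('a) ^ m"
  have Q0: "Q > 0" unfolding Q_def by (rule Q_pos)
  have X0: "(fps_X ^ Q :: 'a fps) $ 0 = 0" using Q0 by simp
  have b: "bracket m = (fps_X ^ Q - fps_X :: 'a fps)" by (simp add: bracket_def Q_def)
  have b0: "(bracket m :: 'a fps) $ 0 = 0" using X0 by (simp add: b)
  have nb0: "(- bracket m :: 'a fps) $ 0 = 0" using b0 by simp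
  have "(\<lambda>i. bracket m ^ i * (hasse i (hasse n x) oo fps_X)) sums (hasse n x oo (fps_X + bracket m))"
    by (rule taylor) (simp_all add: b0)
  moreover have "fps_X + bracket m = (fps_X ^ Q :: 'a fps)" by (simp add: b)
  ultimately have "(\<lambda>i. bracket m ^ i * (hasse i (hasse n x) oo fps_X)) sums (hasse n x ^ Q)"
    using pow_compose[of "hasse n x" m] by (simp add: Q_def)
  thus "(\<lambda>i. (bracket m :: 'a fps) ^ i * of_nat ((i + n) choose n) * hasse (i + n) x)
            sums (hasse n x ^ (CARD('a) ^ m))"
    by (simp add: hasse_hasse mult.assoc Q_def)
  have "(\<lambda>i. (- bracket m) ^ i * (hasse i (hasse n x) oo fps_X ^ Q)) sums (hasse n x oo (fps_X ^ Q + - bracket m))"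
    by (rule taylor[OF X0 nb0])
  moreover have "fps_X ^ Q + - bracket m = (fps_X :: 'a fps)" by (simp add: b)
  moreover have "hasse i (hasse n x) oo fps_X ^ Q = of_nat ((i + n) choose n) * hasse (i + n) x ^ Q" for i
  proof -
    have "hasse i (hasse n x) oo fps_X ^ Q = (hasse i (hasse n x)) ^ Q"
      unfolding Q_def by (rule pow_compose[symmetric])
    also have "\<dots> = (fps_const (of_nat ((i + n) choose n)) * hasse (i + n) x) ^ Q"
      by (simp add: hasse_hasse fps_of_nat)
    also have "\<dots> = of_nat ((i + n) choose n) * hasse (i + n) x ^ Q"
      by (simp add: power_mult_distrib Q_def of_nat_pow_Q fps_of_nat)
    finally show ?thesis .
  qed
  ultimately show "(\<lambda>i. (- (bracket m :: 'a fps)) ^ i * of_nat ((i + n) choose n) * hasse (i + n) x ^ (CARD('a) ^ m))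
            sums (hasse n x)"
    by (simp add: mult.assoc Q_def)
qed

end
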